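(* Assume (C1) and (C2). Then for every $x\in E$ and every stopping time $\tau$ with $\mathbb{E}^x\{\tau\}<\infty$, \[ \lim_{T\to\infty}\mathbb{E}^x\Big\{\int_0^{\tau\wedge T}f(X_s)\,ds+g(X_{\tau\wedge T})\Big\}=\mathbb{E}^x\Big\{\int_0^{\tau}f(X_s)\,ds+g(X_{\tau})\Big\}. \]
   Context: Let $(E,\rho)$ be a locally compact metric space with Borel $\sigma$-field, and let $(X_t)_{t\ge0}$ be a Markov process with right-continuous paths on a filtered space $(\Omega,\mathcal F,(\mathcal F_t))$, taking values in $E$; $\mathbb{P}^x$ denotes the law of the process started at $x$ and $\mathbb{E}^x$ the corresponding expectation. Stopping times are with respect to $(\mathcal F_t)$. Let $f:E\to\mathbb R$ be continuous and bounded and $g:E\to\mathbb R$ continuous (possibly unbounded). (C1) $\zeta^+:=\sup_{t\ge0}g^+(X_t)$ is $\mathbb{P}^x$-integrable for every $x$. (C2) For every $x$ and every family of events $A_T\in\mathcal F_T$, $T>0$: if $\lim_{T\to\infty}\mathbb{P}^x(A_T)=0$ then $\lim_{T\to\infty}\mathbb{E}^x\{\mathbf 1_{A_T}g^-(X_T)\}=0$. *)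

theory Defs
  imports "HOL-Analysis.Analysis" "HOL-Probability.Probability"
begin

definition filtered_space :: "'w measure \<Rightarrow> (real \<Rightarrow> 'w measure) \<Rightarrow> bool" where
  "filtered_space M F \<longleftrightarrow>
     (\<forall>t\<ge>0. space (F t) = space M \<and> sets (F t) \<subseteq> sets M) \<and>
     (\<forall>s t. 0 \<le> s \<longrightarrow> s \<le> t \<longrightarrow> sets (F s) \<subseteq> sets (F t))"

text \<open>The Markov property is stated in the usual form
  P^x(B \<inter> {X_{t+s} \<in> A}) = E^x[1_B P^{X_t}(X_s \<in> A)] for B \<in> F_t.\<close>
definition markov_process ::
  "'w measure \<Rightarrow> (real \<Rightarrow> 'w measure) \<Rightarrow> ('e::topological_space \<Rightarrow> 'w measure) \<Rightarrow> (real \<Rightarrow> 'w \<Rightarrow> 'e) \<Rightarrow> bool" where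
  "markov_process M F P X \<longleftrightarrow>
     filtered_space M F \<and>
     (\<forall>x. prob_space (P x) \<and> sets (P x) = sets M) \<and>
     (\<forall>t\<ge>0. X t \<in> measurable (F t) borel) \<and>
     (\<forall>\<omega>\<in>space M. \<forall>t\<ge>0. continuous (at_right t) (\<lambda>s. X s \<omega>)) \<and>
     (\<forall>x. AE \<omega> in P x. X 0 \<omega> = x) \<and>
     (\<forall>L\<in>sets M. (\<lambda>y. measure (P y) L) \<in> borel_measurable borel) \<and>
     (\<forall>x s t A B. 0 \<le> s \<longrightarrow> 0 \<le> t \<longrightarrow> A \<in> sets borel \<longrightarrow> B \<in> sets (F t) \<longrightarrow>
        measure (P x) (B \<inter> {\<omega>\<in>space M. X (t + s) \<omega> \<in> A}) =
        (LINT \<omega>:B|P x. measure (P (X t \<omega>)) {\<omega>'\<in>space M. X s \<omega>' \<in> A}))"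

definition stopping_time_wrt :: "'w measure \<Rightarrow> (real \<Rightarrow> 'w measure) \<Rightarrow> ('w \<Rightarrow> ennreal) \<Rightarrow> bool" where
  "stopping_time_wrt M F \<tau> \<longleftrightarrow>
     (\<forall>t\<ge>0. {\<omega>\<in>space M. \<tau> \<omega> \<le> ennreal t} \<in> sets (F t))"

definition stop_min :: "('w \<Rightarrow> ennreal) \<Rightarrow> real \<Rightarrow> 'w \<Rightarrow> real" where
  "stop_min \<tau> T \<omega> = enn2real (min (\<tau> \<omega>) (ennreal T))"

definition ext_expectation :: "'w measure \<Rightarrow> ('w \<Rightarrow> real) \<Rightarrow> ereal" where
  "ext_expectation M Y =
     enn2ereal (\<integral>\<^sup>+\<omega>. ennreal (Y \<omega>) \<partial>M) - enn2ereal (\<integral>\<^sup>+\<omega>. ennreal (- Y \<omega>) \<partial>M)"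

end

theory Submission imports Defs begin

lemma q_conv:
  fixes u :: real assumes u: "0 \<le> u"
  shows "((\<lambda>n. (real (nat \<lfloor>2^n * u\<rfloor>) + 1) / 2^n) \<longlonglongrightarrow> u) \<and>
     (\<forall>n. (real (nat \<lfloor>2^n * u\<rfloor>) + 1) / 2^n > u)"
proof -
  have fl: "real (nat \<lfloor>2^n * u\<rfloor>) = of_int \<lfloor>2^n * u\<rfloor>" for n :: nat
    using u by simp
  have a: "u < (real (nat \<lfloor>2^n * u\<rfloor>) + 1) / 2^n" for n :: nat
  proof -
    have p: "(0::real) < 2^n" by simp
    have "2^n * u < of_int \<lfloor>2^n * u\<rfloor> + 1" by linarith
    then have "u * 2^n < real (nat \<lfloor>2^n * u\<rfloor>) + 1" unfolding fl by (simp add: mult.commute)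
    then show ?thesis using p by (simp add: pos_less_divide_eq)
  qed
  have b: "(real (nat \<lfloor>2^n * u\<rfloor>) + 1) / 2^n \<le> u + (1/2)^n" for n :: nat
  proof -
    have p: "(0::real) < 2^n" by simp
    have "of_int \<lfloor>2^n * u\<rfloor> + 1 \<le> 2^n * u + 1" by linarith
    then have "real (nat \<lfloor>2^n * u\<rfloor>) + 1 \<le> (u + (1/2)^n) * 2^n"
      unfolding fl by (simp add: algebra_simps power_one_over)
    then show ?thesis using p by (simp add: pos_divide_le_eq)
  qed
  have "(\<lambda>n. u + (1/2::real)^n) \<longlonglongrightarrow> u + 0"
    by (intro tendsto_add tendsto_const LIMSEQ_realpow_zero) auto
  then have "(\<lambda>n. u + (1/2::real)^n) \<longlonglongrightarrow> u" by simp
  then have "(\<lambda>n. (real (nat \<lfloor>2^n * u\<rfloor>) + 1) / 2^n) \<longlonglongrightarrow> u"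
    by (rule tendsto_sandwich[rotated 2, OF tendsto_const])
       (auto intro!: always_eventually less_imp_le[OF a] b)
  then show ?thesis using a by auto
qed

lemma joint_meas:
  fixes X :: "real \<Rightarrow> 'w \<Rightarrow> 'e::metric_space" and h :: "'e \<Rightarrow> real"
  assumes Xm: "\<And>t. t \<ge> 0 \<Longrightarrow> X t \<in> measurable M borel"
    and rc: "\<And>\<omega> t. \<omega> \<in> space M \<Longrightarrow> t \<ge> 0 \<Longrightarrow> continuous (at_right t) (\<lambda>s. X s \<omega>)"
    and h: "continuous_on UNIV h"
  shows "(\<lambda>p. h (X (max 0 (snd p)) (fst p))) \<in> borel_measurable (M \<Otimes>\<^sub>M borel)"
proof -
  let ?q = "\<lambda>n (u::real). (real (nat \<lfloor>2^n * u\<rfloor>) + 1) / 2^n"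
  have hm: "h \<in> borel_measurable borel" by (rule borel_measurable_continuous_onI[OF h])
  have meas: "(\<lambda>p. h (X (?q n (max 0 (snd p))) (fst p))) \<in> borel_measurable (M \<Otimes>\<^sub>M borel)" for n
  proof -
    have fk: "(\<lambda>p. h (X ((real k + 1) / 2^n) (fst p))) \<in> borel_measurable (M \<Otimes>\<^sub>M borel)" for k :: nat
    proof -
      have xk: "X ((real k + 1) / 2^n) \<in> measurable M borel" by (rule Xm) simp
      have "(\<lambda>p. X ((real k + 1) / 2^n) (fst p)) \<in> measurable (M \<Otimes>\<^sub>M borel) borel"
        by (rule measurable_compose[OF measurable_fst xk])
      from measurable_compose[OF this hm] show ?thesis .
    qed
    have gm: "(\<lambda>p. nat \<lfloor>(2::real)^n * max 0 (snd p :: real)\<rfloor>) \<in> measurable (M \<Otimes>\<^sub>M borel) (count_space UNIV)"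
      by measurable
    have "(\<lambda>p. (\<lambda>k p. h (X ((real k + 1) / 2^n) (fst p))) ((\<lambda>p. nat \<lfloor>(2::real)^n * max 0 (snd p :: real)\<rfloor>) p) p)
       \<in> borel_measurable (M \<Otimes>\<^sub>M borel)"
      by (rule measurable_compose_countable[where f="\<lambda>k p. h (X ((real k + 1) / 2^n) (fst p))"
            and g="\<lambda>p. nat \<lfloor>(2::real)^n * max 0 (snd p :: real)\<rfloor>", OF fk gm])
    then show ?thesis by simp
  qed
  have conv: "(\<lambda>n. h (X (?q n (max 0 (snd p))) (fst p))) \<longlonglongrightarrow> h (X (max 0 (snd p)) (fst p))"
    if p: "p \<in> space (M \<Otimes>\<^sub>M borel)" for p
  proof -
  from p have \<omega>: "fst p \<in> space M" by (auto simp: space_pair_measure)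
  define u where "u = max 0 (snd p)"
  have u: "0 \<le> u" by (simp add: u_def)
  have fl: "filterlim (\<lambda>n. ?q n u) (at_right u) sequentially"
    using q_conv[OF u] by (auto simp: filterlim_at intro!: always_eventually less_imp_neq[THEN not_sym])
  have "((\<lambda>s. X s (fst p)) \<longlongrightarrow> X u (fst p)) (at_right u)"
    using rc[OF \<omega> u] by (simp add: continuous_within)
  then have "(\<lambda>n. X (?q n u) (fst p)) \<longlonglongrightarrow> X u (fst p)"
    by (rule filterlim_compose[OF _ fl])
  then have "(\<lambda>n. h (X (?q n u) (fst p))) \<longlonglongrightarrow> h (X u (fst p))"
    using h by (intro isCont_tendsto_compose[of _ h]) (auto simp: continuous_on_eq_continuous_at)
  then show ?thesis
    by (simp add: u_def)
  qed
  show ?thesis by (rule borel_measurable_LIMSEQ_real[OF conv meas])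
qed


lemma int_bound:
  fixes \<phi> :: "real \<Rightarrow> real"
  assumes K: "\<And>s. \<bar>\<phi> s\<bar> \<le> K" and r: "0 \<le> r"
  shows "\<bar>LINT s:{0..r}|lborel. \<phi> s\<bar> \<le> K * r"
proof (cases "set_integrable lborel {0..r} \<phi>")
  case True
  have K0: "0 \<le> K" using K[of 0] by simp
  have "\<bar>LINT s:{0..r}|lborel. \<phi> s\<bar> \<le> (LINT s:{0..r}|lborel. \<bar>\<phi> s\<bar>)"
    using set_integral_norm_bound[OF True] by simp
  also have "\<dots> \<le> (LINT s:{0..r}|lborel. K)"
    using K by (intro set_integral_mono set_integrable_abs True borel_integrable_atLeastAtMost') auto
  also have "\<dots> = K * r" using r by (simp add: set_integral_const)
  finally show ?thesis .
next
  case False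
  then have "(LINT s:{0..r}|lborel. \<phi> s) = 0"
    unfolding set_lebesgue_integral_def set_integrable_def by (rule not_integrable_integral_eq)
  then show ?thesis using K[of 0] r by simp
qed

lemma stopped_meas:
  fixes X :: "real \<Rightarrow> 'w \<Rightarrow> 'e::metric_space" and f g :: "'e \<Rightarrow> real"
  assumes Xm: "\<And>t. t \<ge> 0 \<Longrightarrow> X t \<in> measurable M borel"
    and rc: "\<And>\<omega> t. \<omega> \<in> space M \<Longrightarrow> t \<ge> 0 \<Longrightarrow> continuous (at_right t) (\<lambda>s. X s \<omega>)"
    and f: "continuous_on UNIV f" and g: "continuous_on UNIV g"
    and r: "r \<in> borel_measurable M" and r0: "\<And>\<omega>. \<omega> \<in> space M \<Longrightarrow> 0 \<le> r \<omega>"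
  shows "(\<lambda>\<omega>. (LINT s:{0..r \<omega>}|lborel. f (X s \<omega>)) + g (X (r \<omega>) \<omega>)) \<in> borel_measurable M"
proof -
  have jg: "(\<lambda>p. g (X (max 0 (snd p)) (fst p))) \<in> borel_measurable (M \<Otimes>\<^sub>M borel)"
    by (rule joint_meas[OF Xm rc g])
  have jf: "(\<lambda>p. f (X (max 0 (snd p)) (fst p))) \<in> borel_measurable (M \<Otimes>\<^sub>M borel)"
    by (rule joint_meas[OF Xm rc f])
  have pr: "(\<lambda>\<omega>. (\<omega>, r \<omega>)) \<in> measurable M (M \<Otimes>\<^sub>M borel)"
    using r by measurable
  have "(\<lambda>\<omega>. g (X (max 0 (snd (\<omega>, r \<omega>))) (fst (\<omega>, r \<omega>)))) \<in> borel_measurable M"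
    using measurable_compose[OF pr jg] by simp
  then have G: "(\<lambda>\<omega>. g (X (r \<omega>) \<omega>)) \<in> borel_measurable M"
    by (rule measurable_cong[THEN iffD1, rotated]) (simp add: r0 max_absorb2)
  have jf': "(\<lambda>p. f (X (max 0 (snd p)) (fst p))) \<in> borel_measurable (M \<Otimes>\<^sub>M lborel)"
    using jf by (simp add: measurable_cong_sets[OF sets_pair_measure_cong[OF refl sets_lborel] refl])
  have ind0: "(\<lambda>p. if 0 \<le> snd p \<and> snd p \<le> r (fst p) then 1 else 0 :: real) \<in> borel_measurable (M \<Otimes>\<^sub>M lborel)"
    using r by measurable
  have ind: "(\<lambda>p. indicator {0..r (fst p)} (snd p) :: real) \<in> borel_measurable (M \<Otimes>\<^sub>M lborel)"
    using ind0 by (simp add: indicator_def of_bool_def)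
  have "(\<lambda>p. indicator {0..r (fst p)} (snd p) * f (X (max 0 (snd p)) (fst p))) \<in> borel_measurable (M \<Otimes>\<^sub>M lborel)"
    using ind jf' by (rule borel_measurable_times)
  then have "(\<lambda>\<omega>. \<integral>s. indicator {0..r \<omega>} s * f (X (max 0 s) \<omega>) \<partial>lborel) \<in> borel_measurable M"
    by (intro lborel.borel_measurable_lebesgue_integral) (simp add: case_prod_beta')
  moreover have "(\<integral>s. indicator {0..r \<omega>} s * f (X (max 0 s) \<omega>) \<partial>lborel) = (LINT s:{0..r \<omega>}|lborel. f (X s \<omega>))" for \<omega>
    unfolding set_lebesgue_integral_def
    by (intro Bochner_Integration.integral_cong) (auto simp: indicator_def)
  ultimately have "(\<lambda>\<omega>. LINT s:{0..r \<omega>}|lborel. f (X s \<omega>)) \<in> borel_measurable M" by simp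
  then show ?thesis using G by (rule borel_measurable_add)
qed


lemma rc_conv:
  fixes X :: "real \<Rightarrow> 'w \<Rightarrow> 'e::metric_space" and h :: "'e \<Rightarrow> real"
  assumes rc: "continuous (at_right u) (\<lambda>s. X s \<omega>)" and u: "0 \<le> u"
    and h: "continuous_on UNIV h"
  shows "(\<lambda>n. h (X ((real (nat \<lfloor>2^n * u\<rfloor>) + 1) / 2^n) \<omega>)) \<longlonglongrightarrow> h (X u \<omega>)"
proof -
  let ?q = "\<lambda>n (u::real). (real (nat \<lfloor>2^n * u\<rfloor>) + 1) / 2^n"
  have fl: "filterlim (\<lambda>n. ?q n u) (at_right u) sequentially"
    using q_conv[OF u] by (auto simp: filterlim_at intro!: always_eventually less_imp_neq[THEN not_sym])
  have "((\<lambda>s. X s \<omega>) \<longlongrightarrow> X u \<omega>) (at_right u)"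
    using rc by (simp add: continuous_within)
  then have "(\<lambda>n. X (?q n u) \<omega>) \<longlonglongrightarrow> X u \<omega>"
    by (rule filterlim_compose[OF _ fl])
  then show ?thesis
    using h by (intro isCont_tendsto_compose[of _ h]) (auto simp: continuous_on_eq_continuous_at)
qed

theorem mainTheorem8:
  fixes M :: "'w measure" and F :: "real \<Rightarrow> 'w measure"
    and P :: "'e::metric_space \<Rightarrow> 'w measure" and X :: "real \<Rightarrow> 'w \<Rightarrow> 'e"
    and f g :: "'e \<Rightarrow> real" and \<tau> :: "'w \<Rightarrow> ennreal" and x :: 'e
  assumes loc_compact: "locally compact (UNIV :: 'e set)"
    and markov: "markov_process M F P X"
    and f_cont: "continuous_on UNIV f" and f_bdd: "bounded (range f)"
    and g_cont: "continuous_on UNIV g"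
    and C1: "\<forall>y. (\<integral>\<^sup>+\<omega>. (SUP t\<in>{0..}. ennreal (max 0 (g (X t \<omega>)))) \<partial>P y) < \<infinity>"
    and C2: "\<forall>y. \<forall>A :: real \<Rightarrow> 'w set. (\<forall>T>0. A T \<in> sets (F T)) \<longrightarrow>
               ((\<lambda>T. measure (P y) (A T)) \<longlongrightarrow> 0) at_top \<longrightarrow>
               ((\<lambda>T. \<integral>\<^sup>+\<omega>. indicator (A T) \<omega> * ennreal (max 0 (- g (X T \<omega>))) \<partial>P y) \<longlongrightarrow> 0) at_top"
    and stop: "stopping_time_wrt M F \<tau>"
    and tau_int: "(\<integral>\<^sup>+\<omega>. \<tau> \<omega> \<partial>P x) < \<infinity>"
  shows "((\<lambda>T. ext_expectation (P x)
             (\<lambda>\<omega>. (LINT s:{0..stop_min \<tau> T \<omega>}|lborel. f (X s \<omega>)) + g (X (stop_min \<tau> T \<omega>) \<omega>)))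
          \<longlongrightarrow> ext_expectation (P x)
             (\<lambda>\<omega>. (LINT s:{0..enn2real (\<tau> \<omega>)}|lborel. f (X s \<omega>)) + g (X (enn2real (\<tau> \<omega>)) \<omega>))) at_top"
proof -
  note md = markov[unfolded markov_process_def]
  have filt: "filtered_space M F" using md by blast
  have Pps: "prob_space (P x)" and Psets: "sets (P x) = sets M" using md by auto
  have XmF: "\<And>t. t \<ge> 0 \<Longrightarrow> X t \<in> measurable (F t) borel" using md by blast
  have rc: "\<And>\<omega> t. \<omega> \<in> space M \<Longrightarrow> t \<ge> 0 \<Longrightarrow> continuous (at_right t) (\<lambda>s. X s \<omega>)"
    using md by blast
  have FM: "\<And>t. t \<ge> 0 \<Longrightarrow> space (F t) = space M \<and> sets (F t) \<subseteq> sets M"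
    using filt unfolding filtered_space_def by blast
  have Xm: "X t \<in> measurable M borel" if t: "t \<ge> 0" for t
    using XmF[OF t] FM[OF t] unfolding measurable_def by auto
  interpret Q: prob_space "P x" by (rule Pps)
  have Pspace: "space (P x) = space M" using Psets by (rule sets_eq_imp_space_eq)
  have mQ: "\<And>h N. h \<in> measurable M N \<Longrightarrow> h \<in> measurable (P x) N"
    using measurable_cong_sets[OF Psets refl] by blast
  have taum: "\<tau> \<in> borel_measurable M"
  proof (rule borel_measurableI_le)
    fix y :: ennreal
    show "{\<omega> \<in> space M. \<tau> \<omega> \<le> y} \<in> sets M"
    proof (cases y)
      case (real r)
      then have "{\<omega> \<in> space M. \<tau> \<omega> \<le> y} \<in> sets (F r)"
        using stop unfolding stopping_time_wrt_def by auto
      then show ?thesis using FM[OF \<open>0 \<le> r\<close>] by auto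
    next
      case top
      then show ?thesis by simp
    qed
  qed
  note taum[measurable]
  obtain K where K: "\<And>y. \<bar>f y\<bar> \<le> K"
    using f_bdd unfolding bounded_iff by auto
  have K0: "0 \<le> K" using K[of x] by simp
  define Y where "Y = (\<lambda>T \<omega>. (LINT s:{0..stop_min \<tau> T \<omega>}|lborel. f (X s \<omega>)) + g (X (stop_min \<tau> T \<omega>) \<omega>))"
  define Yl where "Yl = (\<lambda>\<omega>. (LINT s:{0..enn2real (\<tau> \<omega>)}|lborel. f (X s \<omega>)) + g (X (enn2real (\<tau> \<omega>)) \<omega>))"
  have Ym: "Y T \<in> borel_measurable M" for T
    unfolding Y_def by (rule stopped_meas[OF Xm rc f_cont g_cont]) (auto simp: stop_min_def)
  have Ylm: "Yl \<in> borel_measurable M"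
    unfolding Yl_def by (rule stopped_meas[OF Xm rc f_cont g_cont]) auto
  have gm: "g \<in> borel_measurable borel" by (rule borel_measurable_continuous_onI[OF g_cont])
  have gXm: "(\<lambda>\<omega>. g (X t \<omega>)) \<in> borel_measurable M" if "t \<ge> 0" for t
    using measurable_compose[OF Xm[OF that] gm] .
  have tau_fin: "AE \<omega> in P x. \<tau> \<omega> \<noteq> \<infinity>"
    using nn_integral_PInf_AE[OF mQ[OF taum]] tau_int by auto
  have sm_eq: "stop_min \<tau> T \<omega> = enn2real (\<tau> \<omega>)" if "\<tau> \<omega> \<le> ennreal T" for T \<omega>
    using that by (simp add: stop_min_def min_absorb1)
  have sm_gt: "stop_min \<tau> T \<omega> = T" if "\<not> \<tau> \<omega> \<le> ennreal T" "0 \<le> T" for T \<omega>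
    using that by (simp add: stop_min_def min_absorb2)
  have sm_le: "stop_min \<tau> T \<omega> \<le> enn2real (\<tau> \<omega>)" if "\<tau> \<omega> \<noteq> \<infinity>" for T \<omega>
    using that unfolding stop_min_def by (intro enn2real_mono) (auto simp: less_top)
  have ev_eq: "\<forall>\<^sub>F T in at_top. Y T \<omega> = Yl \<omega>" if "\<tau> \<omega> \<noteq> \<infinity>" for \<omega>
  proof -
    have "\<forall>\<^sub>F T in at_top. enn2real (\<tau> \<omega>) \<le> T" by (rule eventually_ge_at_top)
    then show ?thesis
    proof eventually_elim
      case (elim T)
      have "\<tau> \<omega> = ennreal (enn2real (\<tau> \<omega>))" using that by (simp add: ennreal_enn2real_if)
      also have "\<dots> \<le> ennreal T" using elim by (rule ennreal_leI)
      finally show ?case unfolding Y_def Yl_def using sm_eq by simp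
    qed
  qed
  define qq where "qq = (\<lambda>(kn::nat\<times>nat). (real (fst kn) + 1) / 2^(snd kn))"
  have qq0: "0 \<le> qq kn" for kn unfolding qq_def by (auto simp: case_prod_beta)
  define Zp where "Zp = (\<lambda>\<omega>. SUP kn\<in>UNIV. ennreal (max 0 (g (X (qq kn) \<omega>))))"
  have Zpm: "Zp \<in> borel_measurable M"
    unfolding Zp_def
  proof (rule borel_measurable_SUP)
    fix kn :: "nat \<times> nat"
    note gXm[OF qq0[of kn], measurable]
    show "(\<lambda>\<omega>. ennreal (max 0 (g (X (qq kn) \<omega>)))) \<in> borel_measurable M" by measurable
  qed simp
  have Zp_int: "(\<integral>\<^sup>+\<omega>. Zp \<omega> \<partial>P x) < \<infinity>"
  proof -
    have "(\<integral>\<^sup>+\<omega>. Zp \<omega> \<partial>P x) \<le> (\<integral>\<^sup>+\<omega>. (SUP t\<in>{0..}. ennreal (max 0 (g (X t \<omega>)))) \<partial>P x)"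
      unfolding Zp_def using qq0
      by (intro nn_integral_mono SUP_least) (auto intro: SUP_upper2)
    then show ?thesis using C1 by (meson le_less_trans)
  qed
  have Zp_fin: "AE \<omega> in P x. Zp \<omega> \<noteq> \<infinity>"
    using nn_integral_PInf_AE[OF mQ[OF Zpm]] Zp_int by auto
  have Zp_bound: "ennreal (max 0 (g (X s \<omega>))) \<le> Zp \<omega>" if "\<omega> \<in> space M" "0 \<le> s" for s \<omega>
  proof (rule LIMSEQ_le_const2)
    show "(\<lambda>n. ennreal (max 0 (g (X ((real (nat \<lfloor>2^n * s\<rfloor>) + 1) / 2^n) \<omega>)))) \<longlonglongrightarrow> ennreal (max 0 (g (X s \<omega>)))"
      by (intro tendsto_ennrealI tendsto_max tendsto_const rc_conv[where X=X and \<omega>=\<omega>, OF rc[OF that] that(2) g_cont])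
    show "\<exists>N. \<forall>n\<ge>N. ennreal (max 0 (g (X ((real (nat \<lfloor>2^n * s\<rfloor>) + 1) / 2^n) \<omega>))) \<le> Zp \<omega>"
    proof (intro exI allI impI)
      fix n :: nat
      have "(real (nat \<lfloor>2^n * s\<rfloor>) + 1) / 2^n = qq (nat \<lfloor>2^n * s\<rfloor>, n)" by (simp add: qq_def)
      then show "ennreal (max 0 (g (X ((real (nat \<lfloor>2^n * s\<rfloor>) + 1) / 2^n) \<omega>))) \<le> Zp \<omega>"
        unfolding Zp_def by (metis (no_types, lifting) SUP_upper UNIV_I)
    qed
  qed
  have gpos_bound: "max 0 (g (X s \<omega>)) \<le> enn2real (Zp \<omega>)" if "\<omega> \<in> space M" "0 \<le> s" "Zp \<omega> \<noteq> \<infinity>" for s \<omega>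
  proof -
    have "enn2real (ennreal (max 0 (g (X s \<omega>)))) \<le> enn2real (Zp \<omega>)"
      using Zp_bound[OF that(1,2)] that(3) by (intro enn2real_mono) (auto simp: less_top)
    moreover have "enn2real (ennreal (max 0 (g (X s \<omega>)))) = max 0 (g (X s \<omega>))"
      by (rule enn2real_ennreal) simp
    ultimately show ?thesis by linarith
  qed
  have tau_ri: "integrable (P x) (\<lambda>\<omega>. enn2real (\<tau> \<omega>))"
  proof (rule integrableI_nn_integral_finite)
    show "(\<lambda>\<omega>. enn2real (\<tau> \<omega>)) \<in> borel_measurable (P x)" by (rule mQ) measurable
    show "AE \<omega> in P x. 0 \<le> enn2real (\<tau> \<omega>)" by simp
    have "(\<integral>\<^sup>+\<omega>. ennreal (enn2real (\<tau> \<omega>)) \<partial>P x) = (\<integral>\<^sup>+\<omega>. \<tau> \<omega> \<partial>P x)"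
      using tau_fin by (intro nn_integral_cong_AE) (auto simp: ennreal_enn2real_if)
    also have "\<dots> = ennreal (enn2real (\<integral>\<^sup>+\<omega>. \<tau> \<omega> \<partial>P x))"
      using tau_int by (simp add: ennreal_enn2real_if)
    finally show "(\<integral>\<^sup>+\<omega>. ennreal (enn2real (\<tau> \<omega>)) \<partial>P x) = ennreal (enn2real (\<integral>\<^sup>+\<omega>. \<tau> \<omega> \<partial>P x))" .
  qed
  have Zp_ri: "integrable (P x) (\<lambda>\<omega>. enn2real (Zp \<omega>))"
  proof (rule integrableI_nn_integral_finite)
    show "(\<lambda>\<omega>. enn2real (Zp \<omega>)) \<in> borel_measurable (P x)" using Zpm by (intro mQ) measurable
    show "AE \<omega> in P x. 0 \<le> enn2real (Zp \<omega>)" by simp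
    have "(\<integral>\<^sup>+\<omega>. ennreal (enn2real (Zp \<omega>)) \<partial>P x) = (\<integral>\<^sup>+\<omega>. Zp \<omega> \<partial>P x)"
      using Zp_fin by (intro nn_integral_cong_AE) (auto simp: ennreal_enn2real_if)
    also have "\<dots> = ennreal (enn2real (\<integral>\<^sup>+\<omega>. Zp \<omega> \<partial>P x))"
      using Zp_int by (simp add: ennreal_enn2real_if)
    finally show "(\<integral>\<^sup>+\<omega>. ennreal (enn2real (Zp \<omega>)) \<partial>P x) = ennreal (enn2real (\<integral>\<^sup>+\<omega>. Zp \<omega> \<partial>P x))" .
  qed
  define w where "w = (\<lambda>\<omega>. K * enn2real (\<tau> \<omega>) + enn2real (Zp \<omega>))"
  have w_int: "integrable (P x) w"
    unfolding w_def using tau_ri Zp_ri by (intro Bochner_Integration.integrable_add integrable_mult_right)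
  have w0: "0 \<le> w \<omega>" for \<omega> unfolding w_def using K0 by simp
  have posb: "max 0 ((LINT s:{0..r}|lborel. f (X s \<omega>)) + g (X r \<omega>)) \<le> w \<omega>"
    if "\<omega> \<in> space M" "Zp \<omega> \<noteq> \<infinity>" "0 \<le> r" "r \<le> enn2real (\<tau> \<omega>)" for \<omega> r
  proof -
    have "\<bar>LINT s:{0..r}|lborel. f (X s \<omega>)\<bar> \<le> K * r"
      using K that(3) by (rule int_bound)
    also have "\<dots> \<le> K * enn2real (\<tau> \<omega>)" using K0 that(4) by (rule mult_left_mono[rotated])
    finally have a: "\<bar>LINT s:{0..r}|lborel. f (X s \<omega>)\<bar> \<le> K * enn2real (\<tau> \<omega>)" .
    have b: "max 0 (g (X r \<omega>)) \<le> enn2real (Zp \<omega>)" using gpos_bound that by blast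
    have ar: "\<And>a b c d::real. \<bar>a\<bar> \<le> c \<Longrightarrow> max 0 b \<le> d \<Longrightarrow> max 0 (a + b) \<le> c + d"
      by arith
    show ?thesis using ar[OF a b] unfolding w_def .
  qed
  have AEs: "AE \<omega> in P x. \<omega> \<in> space M" using AE_space[of "P x"] by (simp add: Pspace)
  have Yb: "AE \<omega> in P x. norm (max 0 (Y T \<omega>)) \<le> w \<omega>" for T
    using AEs tau_fin Zp_fin
  proof eventually_elim
    case (elim \<omega>)
    show ?case unfolding Y_def using posb[OF elim(1) elim(3), of "stop_min \<tau> T \<omega>"] sm_le[OF elim(2)]
      by (simp add: stop_min_def)
  qed
  have Ylb: "AE \<omega> in P x. norm (max 0 (Yl \<omega>)) \<le> w \<omega>"
    using AEs tau_fin Zp_fin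
  proof eventually_elim
    case (elim \<omega>)
    show ?case unfolding Yl_def using posb[OF elim(1) elim(3), of "enn2real (\<tau> \<omega>)"] by simp
  qed
  have Ybn: "AE \<omega> in P x. norm (max 0 (Y T \<omega>)) \<le> norm (w \<omega>)" for T
    using Yb[of T] by eventually_elim (use w0 in auto)
  have Ylbn: "AE \<omega> in P x. norm (max 0 (Yl \<omega>)) \<le> norm (w \<omega>)"
    using Ylb by eventually_elim (use w0 in auto)
  have mpT: "(\<lambda>\<omega>. max 0 (Y T \<omega>)) \<in> borel_measurable (P x)" for T
    by (intro mQ borel_measurable_max borel_measurable_const Ym)
  have mpl: "(\<lambda>\<omega>. max 0 (Yl \<omega>)) \<in> borel_measurable (P x)"
    by (intro mQ borel_measurable_max borel_measurable_const Ylm)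
  have pos_lim: "((\<lambda>T. \<integral>\<omega>. max 0 (Y T \<omega>) \<partial>P x) \<longlongrightarrow> (\<integral>\<omega>. max 0 (Yl \<omega>) \<partial>P x)) at_top"
  proof (rule integral_dominated_convergence_at_top[where w=w, OF mpl mpT w_int])
    show "AE \<omega> in P x. ((\<lambda>T. max 0 (Y T \<omega>)) \<longlongrightarrow> max 0 (Yl \<omega>)) at_top"
      using tau_fin
    proof eventually_elim
      case (elim \<omega>)
      show ?case
        by (rule Lim_transform_eventually[OF tendsto_const]) (use ev_eq[OF elim] in \<open>auto elim: eventually_mono\<close>)
    qed
    show "\<forall>\<^sub>F T in at_top. AE \<omega> in P x. norm (max 0 (Y T \<omega>)) \<le> w \<omega>"
      using Yb by simp
  qed
  have posT: "(\<integral>\<^sup>+\<omega>. ennreal (Y T \<omega>) \<partial>P x) = ennreal (\<integral>\<omega>. max 0 (Y T \<omega>) \<partial>P x)" for T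
  proof -
    have "(\<integral>\<^sup>+\<omega>. ennreal (Y T \<omega>) \<partial>P x) = (\<integral>\<^sup>+\<omega>. ennreal (max 0 (Y T \<omega>)) \<partial>P x)"
      by (intro nn_integral_cong) simp
    also have "\<dots> = ennreal (\<integral>\<omega>. max 0 (Y T \<omega>) \<partial>P x)"
      using w0 by (intro nn_integral_eq_integral Bochner_Integration.integrable_bound[OF w_int mpT Ybn]) auto
    finally show ?thesis .
  qed
  have posl: "(\<integral>\<^sup>+\<omega>. ennreal (Yl \<omega>) \<partial>P x) = ennreal (\<integral>\<omega>. max 0 (Yl \<omega>) \<partial>P x)"
  proof -
    have "(\<integral>\<^sup>+\<omega>. ennreal (Yl \<omega>) \<partial>P x) = (\<integral>\<^sup>+\<omega>. ennreal (max 0 (Yl \<omega>)) \<partial>P x)"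
      by (intro nn_integral_cong) simp
    also have "\<dots> = ennreal (\<integral>\<omega>. max 0 (Yl \<omega>) \<partial>P x)"
      using w0 by (intro nn_integral_eq_integral Bochner_Integration.integrable_bound[OF w_int mpl Ylbn]) auto
    finally show ?thesis .
  qed
  have apos: "((\<lambda>T. \<integral>\<^sup>+\<omega>. ennreal (Y T \<omega>) \<partial>P x) \<longlongrightarrow> (\<integral>\<^sup>+\<omega>. ennreal (Yl \<omega>) \<partial>P x)) at_top"
    unfolding posT posl by (rule tendsto_ennrealI[OF pos_lim])
  define A where "A = (\<lambda>T. {\<omega>\<in>space M. \<not> \<tau> \<omega> \<le> ennreal T})"
  define B where "B = (\<lambda>T. {\<omega>\<in>space M. \<tau> \<omega> \<le> ennreal T})"
  have Am[measurable]: "A T \<in> sets M" for T unfolding A_def by measurable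
  have Bm[measurable]: "B T \<in> sets M" for T unfolding B_def by measurable
  have AQ: "A T \<in> sets (P x)" for T using Am Psets by simp
  have AF: "A T \<in> sets (F T)" if "T > 0" for T
  proof -
    have T0: "0 \<le> T" using that by simp
    have "{\<omega>\<in>space M. \<tau> \<omega> \<le> ennreal T} \<in> sets (F T)"
      using stop T0 unfolding stopping_time_wrt_def by auto
    then have "space (F T) - {\<omega>\<in>space M. \<tau> \<omega> \<le> ennreal T} \<in> sets (F T)"
      by (intro sets.Diff sets.top)
    moreover have "space (F T) - {\<omega>\<in>space M. \<tau> \<omega> \<le> ennreal T} = A T"
      using FM[OF T0] unfolding A_def by auto
    ultimately show ?thesis by simp
  qed
  define C where "C = enn2real (\<integral>\<^sup>+\<omega>. \<tau> \<omega> \<partial>P x)"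
  have C: "(\<integral>\<^sup>+\<omega>. \<tau> \<omega> \<partial>P x) = ennreal C" "0 \<le> C"
    using tau_int unfolding C_def by (auto simp: ennreal_enn2real_if)
  have mAb: "measure (P x) (A T) \<le> C / T" if "T > 0" for T
  proof -
    have "ennreal T * emeasure (P x) (A T) = (\<integral>\<^sup>+\<omega>. ennreal T * indicator (A T) \<omega> \<partial>P x)"
      by (rule nn_integral_cmult_indicator[OF AQ, symmetric])
    also have "\<dots> \<le> (\<integral>\<^sup>+\<omega>. \<tau> \<omega> \<partial>P x)"
      by (intro nn_integral_mono) (auto simp: A_def indicator_def not_le less_imp_le)
    finally have "ennreal (T * measure (P x) (A T)) \<le> ennreal C"
      using that C by (simp add: Q.emeasure_eq_measure ennreal_mult)
    then have "T * measure (P x) (A T) \<le> C" using C(2) by (simp add: ennreal_le_iff)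
    then show ?thesis using that by (simp add: field_simps)
  qed
  have mA: "((\<lambda>T. measure (P x) (A T)) \<longlongrightarrow> 0) at_top"
  proof (rule tendsto_sandwich[of "\<lambda>_. 0" _ _ "\<lambda>T. C / T"])
    show "\<forall>\<^sub>F T in at_top. 0 \<le> measure (P x) (A T)" by simp
    show "\<forall>\<^sub>F T in at_top. measure (P x) (A T) \<le> C / T"
      using eventually_gt_at_top[of "0::real"] by eventually_elim (rule mAb)
    show "((\<lambda>T. C / T) \<longlongrightarrow> 0) at_top"
      using tendsto_mult_right_zero[OF tendsto_inverse_0_at_top[OF filterlim_ident], of C]
      by (simp add: divide_inverse)
  qed simp
  have v_lim: "((\<lambda>T. \<integral>\<^sup>+\<omega>. indicator (A T) \<omega> * ennreal (max 0 (- g (X T \<omega>))) \<partial>P x) \<longlongrightarrow> 0) at_top"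
    using C2 AF mA by blast
  have ug: "K * enn2real (\<tau> \<omega>) * indicator (A T) \<omega> \<ge> 0" for T \<omega> using K0 by simp
  have u_int: "integrable (P x) (\<lambda>\<omega>. K * enn2real (\<tau> \<omega>) * indicator (A T) \<omega>)" for T
    using tau_ri by (intro integrable_real_mult_indicator AQ integrable_mult_right)
  have u_eq: "(\<integral>\<^sup>+\<omega>. ennreal (K * enn2real (\<tau> \<omega>) * indicator (A T) \<omega>) \<partial>P x)
      = ennreal (\<integral>\<omega>. K * enn2real (\<tau> \<omega>) * indicator (A T) \<omega> \<partial>P x)" for T
    using ug by (intro nn_integral_eq_integral u_int) auto
  have u_lim0: "((\<lambda>T. \<integral>\<omega>. K * enn2real (\<tau> \<omega>) * indicator (A T) \<omega> \<partial>P x) \<longlongrightarrow> (\<integral>\<omega>. 0 \<partial>P x)) at_top"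
  proof (rule integral_dominated_convergence_at_top[where w="\<lambda>\<omega>. K * enn2real (\<tau> \<omega>)"])
    show "(\<lambda>\<omega>. 0::real) \<in> borel_measurable (P x)" by simp
    show "(\<lambda>\<omega>. K * enn2real (\<tau> \<omega>) * indicator (A T) \<omega>) \<in> borel_measurable (P x)" for T
      by (intro mQ) measurable
    show "integrable (P x) (\<lambda>\<omega>. K * enn2real (\<tau> \<omega>))"
      using tau_ri by (intro integrable_mult_right)
    show "AE \<omega> in P x. ((\<lambda>T. K * enn2real (\<tau> \<omega>) * indicator (A T) \<omega>) \<longlongrightarrow> 0) at_top"
      using tau_fin
    proof eventually_elim
      case (elim \<omega>)
      note fin = elim
      have "\<forall>\<^sub>F T in at_top. enn2real (\<tau> \<omega>) \<le> T" by (rule eventually_ge_at_top)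
      then have "\<forall>\<^sub>F T in at_top. 0 = K * enn2real (\<tau> \<omega>) * indicator (A T) \<omega>"
      proof eventually_elim
        case (elim T)
        have "\<tau> \<omega> = ennreal (enn2real (\<tau> \<omega>))" using fin by (simp add: ennreal_enn2real_if)
        also have "\<dots> \<le> ennreal T" using elim by (rule ennreal_leI)
        finally show ?case by (simp add: A_def)
      qed
      then show ?case by (rule Lim_transform_eventually[OF tendsto_const])
    qed
    show "\<forall>\<^sub>F T in at_top. AE \<omega> in P x. norm (K * enn2real (\<tau> \<omega>) * indicator (A T) \<omega>) \<le> K * enn2real (\<tau> \<omega>)"
      using K0 by (auto simp: indicator_def abs_mult)
  qed
  have u_lim: "((\<lambda>T. \<integral>\<^sup>+\<omega>. ennreal (K * enn2real (\<tau> \<omega>) * indicator (A T) \<omega>) \<partial>P x) \<longlongrightarrow> 0) at_top"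
    unfolding u_eq using tendsto_ennrealI[OF u_lim0] by simp
  have psi_b: "(\<integral>\<^sup>+\<omega>. ennreal (- Y T \<omega>) * indicator (A T) \<omega> \<partial>P x)
     \<le> (\<integral>\<^sup>+\<omega>. ennreal (K * enn2real (\<tau> \<omega>) * indicator (A T) \<omega>) \<partial>P x)
       + (\<integral>\<^sup>+\<omega>. indicator (A T) \<omega> * ennreal (max 0 (- g (X T \<omega>))) \<partial>P x)" if T0: "0 \<le> T" for T
  proof -
    note gXm[OF T0, measurable]
    have "(\<integral>\<^sup>+\<omega>. ennreal (- Y T \<omega>) * indicator (A T) \<omega> \<partial>P x)
      \<le> (\<integral>\<^sup>+\<omega>. ennreal (K * enn2real (\<tau> \<omega>) * indicator (A T) \<omega>)
           + indicator (A T) \<omega> * ennreal (max 0 (- g (X T \<omega>))) \<partial>P x)"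
    proof (rule nn_integral_mono_AE)
      show "AE \<omega> in P x. ennreal (- Y T \<omega>) * indicator (A T) \<omega>
          \<le> ennreal (K * enn2real (\<tau> \<omega>) * indicator (A T) \<omega>) + indicator (A T) \<omega> * ennreal (max 0 (- g (X T \<omega>)))"
        using AEs tau_fin
      proof eventually_elim
        case (elim \<omega>)
        show ?case
        proof (cases "\<omega> \<in> A T")
          case False then show ?thesis by simp
        next
          case True
          then have nle: "\<not> \<tau> \<omega> \<le> ennreal T" by (simp add: A_def)
          have YT: "Y T \<omega> = (LINT s:{0..T}|lborel. f (X s \<omega>)) + g (X T \<omega>)"
            unfolding Y_def using sm_gt[OF nle T0] by simp
          have "ennreal T < ennreal (enn2real (\<tau> \<omega>))"
            using nle elim(2) by (simp add: ennreal_enn2real_if not_le)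
          then have Tt: "T \<le> enn2real (\<tau> \<omega>)" using ennreal_less_iff[OF T0] by auto
          have "\<bar>LINT s:{0..T}|lborel. f (X s \<omega>)\<bar> \<le> K * T" using K T0 by (rule int_bound)
          also have "\<dots> \<le> K * enn2real (\<tau> \<omega>)" using K0 Tt by (rule mult_left_mono[rotated])
          finally have a: "\<bar>LINT s:{0..T}|lborel. f (X s \<omega>)\<bar> \<le> K * enn2real (\<tau> \<omega>)" .
          have "- Y T \<omega> \<le> K * enn2real (\<tau> \<omega>) + max 0 (- g (X T \<omega>))"
            unfolding YT using a by linarith
          then have "ennreal (- Y T \<omega>) \<le> ennreal (K * enn2real (\<tau> \<omega>) + max 0 (- g (X T \<omega>)))"
            by (rule ennreal_leI)
          also have "\<dots> = ennreal (K * enn2real (\<tau> \<omega>)) + ennreal (max 0 (- g (X T \<omega>)))"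
            using K0 by (intro ennreal_plus) auto
          finally show ?thesis using True by simp
        qed
      qed
    qed
    also have "\<dots> = (\<integral>\<^sup>+\<omega>. ennreal (K * enn2real (\<tau> \<omega>) * indicator (A T) \<omega>) \<partial>P x)
       + (\<integral>\<^sup>+\<omega>. indicator (A T) \<omega> * ennreal (max 0 (- g (X T \<omega>))) \<partial>P x)"
      by (rule nn_integral_add) (intro mQ; measurable)+
    finally show ?thesis .
  qed
  have psi_lim: "((\<lambda>T. \<integral>\<^sup>+\<omega>. ennreal (- Y T \<omega>) * indicator (A T) \<omega> \<partial>P x) \<longlongrightarrow> 0) at_top"
  proof (rule tendsto_sandwich[of "\<lambda>_. 0" _ _ "\<lambda>T. (\<integral>\<^sup>+\<omega>. ennreal (K * enn2real (\<tau> \<omega>) * indicator (A T) \<omega>) \<partial>P x)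
       + (\<integral>\<^sup>+\<omega>. indicator (A T) \<omega> * ennreal (max 0 (- g (X T \<omega>))) \<partial>P x)"])
    show "\<forall>\<^sub>F T in at_top. 0 \<le> (\<integral>\<^sup>+\<omega>. ennreal (- Y T \<omega>) * indicator (A T) \<omega> \<partial>P x)" by simp
    show "\<forall>\<^sub>F T in at_top. (\<integral>\<^sup>+\<omega>. ennreal (- Y T \<omega>) * indicator (A T) \<omega> \<partial>P x)
     \<le> (\<integral>\<^sup>+\<omega>. ennreal (K * enn2real (\<tau> \<omega>) * indicator (A T) \<omega>) \<partial>P x)
       + (\<integral>\<^sup>+\<omega>. indicator (A T) \<omega> * ennreal (max 0 (- g (X T \<omega>))) \<partial>P x)"
      using eventually_ge_at_top[of "0::real"] by eventually_elim (rule psi_b)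
    show "((\<lambda>T. (\<integral>\<^sup>+\<omega>. ennreal (K * enn2real (\<tau> \<omega>) * indicator (A T) \<omega>) \<partial>P x)
       + (\<integral>\<^sup>+\<omega>. indicator (A T) \<omega> * ennreal (max 0 (- g (X T \<omega>))) \<partial>P x)) \<longlongrightarrow> 0) at_top"
      using tendsto_add[OF u_lim v_lim] by simp
  qed simp
  define \<phi> where "\<phi> = (\<lambda>T. \<integral>\<^sup>+\<omega>. ennreal (- Yl \<omega>) * indicator (B T) \<omega> \<partial>P x)"
  define nl where "nl = (\<integral>\<^sup>+\<omega>. ennreal (- Yl \<omega>) \<partial>P x)"
  have Bind[measurable]: "(indicator (B T) :: 'w \<Rightarrow> ennreal) \<in> borel_measurable M" for T
    by (rule borel_measurable_indicator[OF Bm])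
  have Aind[measurable]: "(indicator (A T) :: 'w \<Rightarrow> ennreal) \<in> borel_measurable M" for T
    by (rule borel_measurable_indicator[OF Am])
  have Bi: "(\<lambda>\<omega>. ennreal (- Yl \<omega>) * indicator (B T) \<omega>) \<in> borel_measurable M" for T
    using Ylm by measurable
  have Ai: "(\<lambda>\<omega>. ennreal (- Y T \<omega>) * indicator (A T) \<omega>) \<in> borel_measurable M" for T
    using Ym[of T] by measurable
  have phi_mono: "\<phi> T \<le> \<phi> T'" if "T \<le> T'" for T T'
  proof -
    have "B T \<subseteq> B T'" using that unfolding B_def by (auto intro: order_trans ennreal_leI)
    then show ?thesis unfolding \<phi>_def
      by (intro nn_integral_mono mult_left_mono) (auto simp: indicator_def)
  qed
  have phi_le: "\<phi> T \<le> nl" for T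
    unfolding \<phi>_def nl_def by (intro nn_integral_mono) (auto simp: indicator_def)
  have phi_seq: "(\<lambda>k::nat. \<phi> (real k)) \<longlonglongrightarrow> nl"
  proof -
    have inc: "incseq (\<lambda>k::nat. \<phi> (real k))" by (intro monoI phi_mono) simp
    have incf: "incseq (\<lambda>(k::nat) \<omega>. ennreal (- Yl \<omega>) * indicator (B (real k)) \<omega>)"
    proof (intro monoI le_funI)
      fix k k' :: nat and \<omega> assume "k \<le> k'"
      then have "B (real k) \<subseteq> B (real k')" unfolding B_def by (auto intro: order_trans ennreal_leI)
      then show "ennreal (- Yl \<omega>) * indicator (B (real k)) \<omega> \<le> ennreal (- Yl \<omega>) * indicator (B (real k')) \<omega>"
        by (intro mult_left_mono) (auto simp: indicator_def)
    qed
    have "(SUP k. \<phi> (real k)) = (\<integral>\<^sup>+\<omega>. (SUP k. ennreal (- Yl \<omega>) * indicator (B (real k)) \<omega>) \<partial>P x)"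
      unfolding \<phi>_def using Ylm
      by (intro nn_integral_monotone_convergence_SUP[symmetric] incf mQ Bi)
    also have "\<dots> = nl"
      unfolding nl_def
    proof (rule nn_integral_cong_AE)
      show "AE \<omega> in P x. (SUP k. ennreal (- Yl \<omega>) * indicator (B (real k)) \<omega>) = ennreal (- Yl \<omega>)"
        using AEs tau_fin
      proof eventually_elim
        case (elim \<omega>)
        obtain k :: nat where k: "enn2real (\<tau> \<omega>) \<le> real k" using real_arch_simple by blast
        have "\<tau> \<omega> = ennreal (enn2real (\<tau> \<omega>))" using elim(2) by (simp add: ennreal_enn2real_if)
        also have "\<dots> \<le> ennreal (real k)" using k by (rule ennreal_leI)
        finally have "\<omega> \<in> B (real k)" using elim(1) by (simp add: B_def)
        then have "ennreal (- Yl \<omega>) \<le> (SUP k. ennreal (- Yl \<omega>) * indicator (B (real k)) \<omega>)"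
          by (intro SUP_upper2[of k]) auto
        moreover have "(SUP k. ennreal (- Yl \<omega>) * indicator (B (real k)) \<omega>) \<le> ennreal (- Yl \<omega>)"
          by (intro SUP_least) (auto simp: indicator_def)
        ultimately show ?case by (rule antisym[rotated])
      qed
    qed
    finally show ?thesis using LIMSEQ_SUP[OF inc] by simp
  qed
  have phi_lim: "(\<phi> \<longlongrightarrow> nl) at_top"
  proof (rule order_tendstoI)
    fix a assume "a < nl"
    then have "\<forall>\<^sub>F k in sequentially. a < \<phi> (real k)" by (rule order_tendstoD(1)[OF phi_seq])
    then obtain k :: nat where k: "a < \<phi> (real k)" by (auto simp: eventually_sequentially)
    show "\<forall>\<^sub>F T in at_top. a < \<phi> T"
      using eventually_ge_at_top[of "real k"]
      by eventually_elim (use k phi_mono in \<open>blast intro: less_le_trans\<close>)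
  next
    fix a assume "nl < a"
    then show "\<forall>\<^sub>F T in at_top. \<phi> T < a" using phi_le by (intro always_eventually allI) (rule le_less_trans)
  qed
  have split: "(\<integral>\<^sup>+\<omega>. ennreal (- Y T \<omega>) \<partial>P x)
      = \<phi> T + (\<integral>\<^sup>+\<omega>. ennreal (- Y T \<omega>) * indicator (A T) \<omega> \<partial>P x)" if T0: "0 \<le> T" for T
  proof -
    have "(\<integral>\<^sup>+\<omega>. ennreal (- Y T \<omega>) \<partial>P x)
      = (\<integral>\<^sup>+\<omega>. ennreal (- Yl \<omega>) * indicator (B T) \<omega> + ennreal (- Y T \<omega>) * indicator (A T) \<omega> \<partial>P x)"
    proof (rule nn_integral_cong)
      fix \<omega> assume "\<omega> \<in> space (P x)"
      then have \<omega>: "\<omega> \<in> space M" by (simp add: Pspace)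
      show "ennreal (- Y T \<omega>) = ennreal (- Yl \<omega>) * indicator (B T) \<omega> + ennreal (- Y T \<omega>) * indicator (A T) \<omega>"
      proof (cases "\<tau> \<omega> \<le> ennreal T")
        case True
        then have "Y T \<omega> = Yl \<omega>" unfolding Y_def Yl_def using sm_eq by simp
        then show ?thesis using True \<omega> by (simp add: A_def B_def)
      next
        case False
        then show ?thesis using \<omega> by (simp add: A_def B_def)
      qed
    qed
    also have "\<dots> = \<phi> T + (\<integral>\<^sup>+\<omega>. ennreal (- Y T \<omega>) * indicator (A T) \<omega> \<partial>P x)"
      unfolding \<phi>_def by (intro nn_integral_add mQ Ai Bi)
    finally show ?thesis .
  qed
  have aneg: "((\<lambda>T. \<integral>\<^sup>+\<omega>. ennreal (- Y T \<omega>) \<partial>P x) \<longlongrightarrow> nl) at_top"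
  proof (rule Lim_transform_eventually)
    show "((\<lambda>T. \<phi> T + (\<integral>\<^sup>+\<omega>. ennreal (- Y T \<omega>) * indicator (A T) \<omega> \<partial>P x)) \<longlongrightarrow> nl) at_top"
      using tendsto_add[OF phi_lim psi_lim] by simp
    show "\<forall>\<^sub>F T in at_top. \<phi> T + (\<integral>\<^sup>+\<omega>. ennreal (- Y T \<omega>) * indicator (A T) \<omega> \<partial>P x) = (\<integral>\<^sup>+\<omega>. ennreal (- Y T \<omega>) \<partial>P x)"
      using eventually_ge_at_top[of "0::real"] by eventually_elim (rule split[symmetric])
  qed
  have "((\<lambda>T. enn2ereal (\<integral>\<^sup>+\<omega>. ennreal (Y T \<omega>) \<partial>P x) - enn2ereal (\<integral>\<^sup>+\<omega>. ennreal (- Y T \<omega>) \<partial>P x))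
     \<longlongrightarrow> enn2ereal (\<integral>\<^sup>+\<omega>. ennreal (Yl \<omega>) \<partial>P x) - enn2ereal nl) at_top"
    by (rule tendsto_diff_ereal_general[OF tendsto_enn2erealI[OF apos] tendsto_enn2erealI[OF aneg]])
       (simp add: posl)
  then show ?thesis unfolding ext_expectation_def Y_def Yl_def nl_def .
qed

end
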